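(* Let $p\ge2$ be a fixed integer, and let $\lambda=[a_0,a_1,\ldots]_p$ and $\mu=[b_0,b_1,\ldots]_p$ be partitions in $\mathcal P$. Fix an index $i$ and let $m=\min\{a_i,b_i\}$. Let $\tilde\lambda$ be obtained from $\lambda$ by replacing $a_i$ with $a_i-m$, and $\tilde\mu$ be obtained from $\mu$ by replacing $b_i$ with $b_i-m$ (i.e. removing $m$ entries equal to $p^i$ from each). Then $\lambda$ stably embeds into $\mu$ if and only if $\tilde\lambda$ stably embeds into $\tilde\mu$.
   Context: $\mathcal P$ is the set of integral partitions (finite nonincreasing sequences of positive integers) all of whose entries are powers $p^k$, $k\ge0$. The notation $[a_0,a_1,\ldots,a_s]_p$ denotes the partition in $\mathcal P$ having exactly $a_k$ entries equal to $p^k$ for each $k$. The empty partition is allowed and embeds into every partition. The product $\lambda\times\nu$ is the partition of all products $\lambda_i\nu_j$, reordered nonincreasingly. $\lambda=[\lambda_1,\ldots,\lambda_m]$ embeds into $\mu=[\mu_1,\ldots,\mu_n]$, written $\lambda\hookrightarrow\mu$, if there is a map $\varphi:\{1,\ldots,m\}\to\{1,\ldots,n\}$ with $\sum_{i\in\varphi^{-1}(j)}\lambda_i\le\mu_j$ for all $j$. $\lambda$ stably embeds into $\mu$ if there is an integral partition $\nu$ with $\lambda\times\nu\hookrightarrow\mu\times\nu$. *)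

theory Defs
  imports Main
begin

definition is_partition :: "nat list \<Rightarrow> bool" where
  "is_partition xs \<longleftrightarrow> sorted_wrt (\<ge>) xs \<and> (\<forall>x\<in>set xs. 0 < x)"

definition ppart :: "nat \<Rightarrow> (nat \<Rightarrow> nat) \<Rightarrow> nat \<Rightarrow> nat list" where
  "ppart p a s = rev (sort (concat (map (\<lambda>k. replicate (a k) (p ^ k)) [0..<Suc s])))"

definition pmult :: "nat list \<Rightarrow> nat list \<Rightarrow> nat list" where
  "pmult lam nu = rev (sort [x * y. x \<leftarrow> lam, y \<leftarrow> nu])"

definition embeds :: "nat list \<Rightarrow> nat list \<Rightarrow> bool" where
  "embeds lam mu \<longleftrightarrow> (\<exists>\<phi> :: nat \<Rightarrow> nat.
      (\<forall>i < length lam. \<phi> i < length mu) \<and>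
      (\<forall>j < length mu. (\<Sum>i \<in> {i. i < length lam \<and> \<phi> i = j}. lam ! i) \<le> mu ! j))"

definition stably_embeds :: "nat list \<Rightarrow> nat list \<Rightarrow> bool" where
  "stably_embeds lam mu \<longleftrightarrow>
     (\<exists>nu. is_partition nu \<and> nu \<noteq> [] \<and> embeds (pmult lam nu) (pmult mu nu))"

end

theory Submission
  imports Defs "HOL-Combinatorics.Permutations"
begin

lemma emb_mset:
  assumes "mset xs = mset ys" shows "embeds xs ys"
proof -
  obtain f where f: "f permutes {..<length ys}" "permute_list f ys = xs"
    using mset_eq_permutation[OF assms] by blast
  have len: "length xs = length ys" using assms mset_eq_length by blast
  have nth: "xs ! i = ys ! f i" if "i < length ys" for i
    using permute_list_nth[OF f(1) that] f(2) by simp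
  show ?thesis unfolding embeds_def
  proof (intro exI[of _ f] conjI allI impI)
    fix i assume "i < length xs" then show "f i < length ys"
      using permutes_in_image[OF f(1)] len by auto
  next
    fix j assume j: "j < length ys"
    have ij: "inv f j < length ys"
      using permutes_in_image[OF permutes_inv[OF f(1)]] j by auto
    have "{i. i < length xs \<and> f i = j} = {inv f j}"
      using ij len permutes_inverses[OF f(1)] by auto
    then show "(\<Sum>i\<in>{i. i < length xs \<and> f i = j}. xs ! i) \<le> ys ! j"
      using nth[of "inv f j"] permutes_inverses(1)[OF f(1)] j
        permutes_in_image[OF permutes_inv[OF f(1)]] by simp
  qed
qed


lemma emb_trans:
  assumes "embeds xs ys" "embeds ys zs" shows "embeds xs zs"
proof -
  obtain f where f: "\<forall>i < length xs. f i < length ys"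
      "\<forall>j < length ys. (\<Sum>i \<in> {i. i < length xs \<and> f i = j}. xs ! i) \<le> ys ! j"
    using assms(1) unfolding embeds_def by blast
  obtain g where g: "\<forall>i < length ys. g i < length zs"
      "\<forall>j < length zs. (\<Sum>i \<in> {i. i < length ys \<and> g i = j}. ys ! i) \<le> zs ! j"
    using assms(2) unfolding embeds_def by blast
  show ?thesis unfolding embeds_def
  proof (intro exI[of _ "g \<circ> f"] conjI allI impI)
    fix i assume "i < length xs" then show "(g \<circ> f) i < length zs" using f g by auto
  next
    fix l assume l: "l < length zs"
    let ?S = "{i. i < length xs \<and> (g \<circ> f) i = l}"
    let ?T = "{j. j < length ys \<and> g j = l}"
    have "(\<Sum>i \<in> ?S. xs ! i) = (\<Sum>j \<in> ?T. \<Sum>i \<in> {i. i \<in> ?S \<and> f i = j}. xs ! i)"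
      by (rule sum.group[symmetric]) (use f in auto)
    also have "\<dots> \<le> (\<Sum>j \<in> ?T. ys ! j)"
    proof (rule sum_mono)
      fix j assume j: "j \<in> ?T"
      have "{i. i \<in> ?S \<and> f i = j} = {i. i < length xs \<and> f i = j}" using j by auto
      then show "(\<Sum>i \<in> {i. i \<in> ?S \<and> f i = j}. xs ! i) \<le> ys ! j" using f j by auto
    qed
    also have "\<dots> \<le> zs ! l" using g l by auto
    finally show "(\<Sum>i \<in> ?S. xs ! i) \<le> zs ! l" .
  qed
qed


lemma emb_single:
  assumes "sum_list xs \<le> y" shows "embeds xs [y]"
  unfolding embeds_def
proof (intro exI[of _ "\<lambda>_. 0"] conjI allI impI)
  fix j assume "j < length [y]"
  then have "j = 0" by simp
  then have "{i. i < length xs \<and> (\<lambda>_. 0::nat) i = j} = {..<length xs}" by auto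
  then show "(\<Sum>i \<in> {i. i < length xs \<and> (\<lambda>_. 0::nat) i = j}. xs ! i) \<le> [y] ! j"
    using assms \<open>j = 0\<close> by (simp add: sum_list_sum_nth atLeast0LessThan)
qed simp




lemma emb_append:
  assumes "embeds xs ys" "embeds xs' ys'" shows "embeds (xs @ xs') (ys @ ys')"
proof -
  obtain f where f: "\<forall>i < length xs. f i < length ys"
      "\<forall>j < length ys. (\<Sum>i \<in> {i. i < length xs \<and> f i = j}. xs ! i) \<le> ys ! j"
    using assms(1) unfolding embeds_def by blast
  obtain g where g: "\<forall>i < length xs'. g i < length ys'"
      "\<forall>j < length ys'. (\<Sum>i \<in> {i. i < length xs' \<and> g i = j}. xs' ! i) \<le> ys' ! j"
    using assms(2) unfolding embeds_def by blast
  define h where "h i = (if i < length xs then f i else length ys + g (i - length xs))" for i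
  show ?thesis unfolding embeds_def
  proof (intro exI[of _ h] conjI allI impI)
    fix i assume "i < length (xs @ xs')" then show "h i < length (ys @ ys')"
      using f g by (auto simp: h_def)
  next
    fix j assume j: "j < length (ys @ ys')"
    show "(\<Sum>i \<in> {i. i < length (xs @ xs') \<and> h i = j}. (xs @ xs') ! i) \<le> (ys @ ys') ! j"
    proof (cases "j < length ys")
      case True
      have "{i. i < length (xs @ xs') \<and> h i = j} = {i. i < length xs \<and> f i = j}"
        using True by (auto simp: h_def split: if_splits)
      moreover have "(\<Sum>i \<in> {i. i < length xs \<and> f i = j}. (xs @ xs') ! i)
          = (\<Sum>i \<in> {i. i < length xs \<and> f i = j}. xs ! i)"
        by (rule sum.cong) (auto simp: nth_append)
      ultimately show ?thesis using f True by (simp add: nth_append)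
    next
      case False
      let ?j = "j - length ys"
      have "{i. i < length (xs @ xs') \<and> h i = j} = (\<lambda>i. i + length xs) ` {i. i < length xs' \<and> g i = ?j}"
      proof (rule set_eqI, rule iffI)
        fix i assume i: "i \<in> {i. i < length (xs @ xs') \<and> h i = j}"
        have ni: "\<not> i < length xs"
        proof
          assume "i < length xs"
          then have "h i < length ys" using f by (simp add: h_def)
          then show False using i False by simp
        qed
        show "i \<in> (\<lambda>i. i + length xs) ` {i. i < length xs' \<and> g i = ?j}"
          by (rule image_eqI[of _ _ "i - length xs"]) (use i ni in \<open>auto simp: h_def\<close>)
      next
        fix i assume "i \<in> (\<lambda>i. i + length xs) ` {i. i < length xs' \<and> g i = ?j}"
        then show "i \<in> {i. i < length (xs @ xs') \<and> h i = j}" using False by (auto simp: h_def)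
      qed
      moreover have "(\<Sum>i \<in> (\<lambda>i. i + length xs) ` {i. i < length xs' \<and> g i = ?j}. (xs @ xs') ! i)
          = (\<Sum>i \<in> {i. i < length xs' \<and> g i = ?j}. xs' ! i)"
        by (subst sum.reindex) (auto simp: inj_on_def nth_append)
      ultimately show ?thesis using g False j by (simp add: nth_append)
    qed
  qed
qed


lemma emb_nil: "embeds [] ys"
  unfolding embeds_def by simp



lemma emb_rep: "embeds (replicate (p * n) x) (replicate n (p * x))"
proof (induction n)
  case 0 then show ?case by (simp add: emb_nil)
next
  case (Suc n)
  have "embeds (replicate p x @ replicate (p * n) x) ([p * x] @ replicate n (p * x))"
    by (rule emb_append[OF emb_single Suc]) (simp add: sum_list_replicate)
  then show ?case by (simp add: replicate_add[symmetric])
qed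


definition thr :: "nat \<Rightarrow> nat list \<Rightarrow> nat" where
  "thr t xs = sum_list (map (\<lambda>x. if t \<le> x then x else 0) xs)"

lemma thr_mset: "mset xs = mset ys \<Longrightarrow> thr t xs = thr t ys"
  unfolding thr_def by (simp only: sum_mset_sum_list[symmetric] mset_map)


lemma emb_thr:
  assumes "embeds xs ys" shows "thr t xs \<le> thr t ys"
proof -
  obtain f where f: "\<forall>i < length xs. f i < length ys"
      "\<forall>j < length ys. (\<Sum>i \<in> {i. i < length xs \<and> f i = j}. xs ! i) \<le> ys ! j"
    using assms(1) unfolding embeds_def by blast
  define g where "g x = (if t \<le> x then x else (0::nat))" for x
  have "thr t xs = (\<Sum>i<length xs. g (xs ! i))"
    unfolding thr_def g_def by (simp add: sum_list_sum_nth atLeast0LessThan)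
  also have "\<dots> = (\<Sum>j<length ys. \<Sum>i \<in> {i. i \<in> {..<length xs} \<and> f i = j}. g (xs ! i))"
    by (rule sum.group[symmetric]) (use f in auto)
  also have "\<dots> \<le> (\<Sum>j<length ys. g (ys ! j))"
  proof (rule sum_mono)
    fix j assume j: "j \<in> {..<length ys}"
    let ?S = "{i. i \<in> {..<length xs} \<and> f i = j}"
    have le: "(\<Sum>i \<in> ?S. xs ! i) \<le> ys ! j" proof -
      have "?S = {i. i < length xs \<and> f i = j}" by auto
      then show ?thesis using f j by simp
    qed
    show "(\<Sum>i \<in> ?S. g (xs ! i)) \<le> g (ys ! j)"
    proof (cases "\<exists>i \<in> ?S. t \<le> xs ! i")
      case True
      then obtain i where i: "i \<in> ?S" "t \<le> xs ! i" by blast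
      have "xs ! i \<le> (\<Sum>i \<in> ?S. xs ! i)" by (rule member_le_sum) (use i in auto)
      then have "t \<le> ys ! j" using i le by linarith
      moreover have "(\<Sum>i \<in> ?S. g (xs ! i)) \<le> (\<Sum>i \<in> ?S. xs ! i)"
        by (rule sum_mono) (simp add: g_def)
      ultimately show ?thesis using le by (simp add: g_def)
    next
      case False
      then have "(\<Sum>i \<in> ?S. g (xs ! i)) = 0" by (auto simp: g_def)
      then show ?thesis by simp
    qed
  qed
  also have "\<dots> = thr t ys"
    unfolding thr_def g_def by (simp add: sum_list_sum_nth atLeast0LessThan)
  finally show ?thesis .
qed

lemma thr_append[simp]: "thr t (xs @ ys) = thr t xs + thr t ys"
  by (simp add: thr_def)

lemma thr_rep[simp]: "thr t (replicate n c) = n * (if t \<le> c then c else 0)"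
  by (induction n) (auto simp: thr_def)

lemma thr_small: "(\<forall>x\<in>set xs. x < t) \<Longrightarrow> thr t xs = 0"
  by (induction xs) (auto simp: thr_def)

lemma greedy:
  fixes p :: nat
  assumes p: "p \<ge> 2"
  shows "(\<forall>x\<in>set xs. \<exists>j\<le>K. x = p^j) \<Longrightarrow> (\<forall>y\<in>set ys. \<exists>j\<le>K. y = p^j)
     \<Longrightarrow> (\<forall>k. thr (p^k) xs \<le> thr (p^k) ys) \<Longrightarrow> embeds xs ys"
proof (induction K arbitrary: xs ys)
  case 0
  have xs1: "\<forall>x\<in>set xs. x = 1" and ys1: "\<forall>x\<in>set ys. x = 1" using 0 by auto
  have xs: "xs = replicate (length xs) 1" using xs1 by (simp add: replicate_length_same)
  have ys: "ys = replicate (length ys) 1" using ys1 by (simp add: replicate_length_same)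
  have "thr 1 xs \<le> thr 1 ys" using 0(3) by (metis power_0)
  then have le: "length xs \<le> length ys" using xs ys by (metis thr_rep le_refl mult.right_neutral if_True)
  have "embeds (xs @ []) (take (length xs) ys @ drop (length xs) ys)"
  proof (rule emb_append[OF emb_mset emb_nil])
    show "mset xs = mset (take (length xs) ys)"
      using le xs ys by (metis take_replicate min_absorb1)
  qed
  then show ?case by simp
next
  case (Suc K)
  define c where "c = p ^ Suc K"
  define xs1 where "xs1 = filter (\<lambda>x. x \<noteq> c) xs"
  define ys1 where "ys1 = filter (\<lambda>x. x \<noteq> c) ys"
  define A where "A = length (filter (\<lambda>x. x = c) xs)"
  define B where "B = length (filter (\<lambda>x. x = c) ys)"
  have fx: "filter (\<lambda>x. x = c) xs = replicate A c" unfolding A_def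
    by (simp add: replicate_length_same)
  have fy: "filter (\<lambda>x. x = c) ys = replicate B c" unfolding B_def
    by (simp add: replicate_length_same)
  have mx: "mset xs = mset (xs1 @ replicate A c)"
    proof -
    have "mset xs = mset (filter (\<lambda>x. x \<noteq> c) xs) + mset (filter (\<lambda>x. x = c) xs)"
      using multiset_partition[of "mset xs" "\<lambda>x. x \<noteq> c"] by simp
    then show ?thesis using fx unfolding xs1_def by simp
  qed
  have my: "mset ys = mset (ys1 @ replicate B c)"
    proof -
    have "mset ys = mset (filter (\<lambda>x. x \<noteq> c) ys) + mset (filter (\<lambda>x. x = c) ys)"
      using multiset_partition[of "mset ys" "\<lambda>x. x \<noteq> c"] by simp
    then show ?thesis using fy unfolding ys1_def by simp
  qed
  have pK: "p ^ K < c" using p unfolding c_def by simp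
  have lowx: "\<forall>x\<in>set xs1. \<exists>j\<le>K. x = p^j"
  proof
    fix x assume "x \<in> set xs1"
    then have "x \<in> set xs" "x \<noteq> c" unfolding xs1_def by auto
    then obtain j where "j \<le> Suc K" "x = p ^ j" using Suc.prems(1) by blast
    then show "\<exists>j\<le>K. x = p^j" using \<open>x \<noteq> c\<close> unfolding c_def by (metis le_SucE)
  qed
  have lowy: "\<forall>x\<in>set ys1. \<exists>j\<le>K. x = p^j"
  proof
    fix x assume "x \<in> set ys1"
    then have "x \<in> set ys" "x \<noteq> c" unfolding ys1_def by auto
    then obtain j where "j \<le> Suc K" "x = p ^ j" using Suc.prems(2) by blast
    then show "\<exists>j\<le>K. x = p^j" using \<open>x \<noteq> c\<close> unfolding c_def by (metis le_SucE)
  qed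
  have small: "thr (p^k) zs = 0" if H1: "\<forall>x\<in>set zs. \<exists>j\<le>K. x = p^j" and H2: "K < k" for zs k
  proof (rule thr_small, intro ballI)
    fix x assume "x \<in> set zs"
    then obtain j where "j \<le> K" "x = p^j" using H1 by blast
    have "j < k" using \<open>j \<le> K\<close> H2 by simp
    moreover have "(1::nat) < p" using p by simp
    ultimately show "x < p ^ k" using power_strict_increasing[of j k p] \<open>x = p^j\<close> by blast
  qed
  have tx: "thr t xs = thr t xs1 + A * (if t \<le> c then c else 0)" for t
    using thr_mset[OF mx] by simp
  have ty: "thr t ys = thr t ys1 + B * (if t \<le> c then c else 0)" for t
    using thr_mset[OF my] by simp
  have "A * c \<le> B * c"
    using Suc.prems(3)[rule_format, of "Suc K"] tx[of c] ty[of c]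
      small[OF lowx, of "Suc K"] small[OF lowy, of "Suc K"] unfolding c_def by simp
  then have AB: "A \<le> B" using pK by simp
  define ys' where "ys' = ys1 @ replicate (p * (B - A)) (p ^ K)"
  have cK: "c = p * p ^ K" unfolding c_def by simp
  have IH: "embeds xs1 ys'"
  proof (rule Suc.IH[OF lowx])
    show "\<forall>y\<in>set ys'. \<exists>j\<le>K. y = p ^ j" using lowy unfolding ys'_def by auto
    show "\<forall>k. thr (p ^ k) xs1 \<le> thr (p ^ k) ys'"
    proof
      fix k
      show "thr (p ^ k) xs1 \<le> thr (p ^ k) ys'"
      proof (cases "k \<le> K")
        case True
        have k1: "p ^ k \<le> p ^ K" using power_increasing[of k K p] True p by simp
        have k2: "p ^ k \<le> c" using k1 pK by simp
        have "thr (p^k) xs1 + A * c \<le> thr (p^k) ys1 + B * c"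
          using Suc.prems(3)[rule_format, of k] tx[of "p^k"] ty[of "p^k"] k2 by simp
        moreover have "thr (p^k) ys' = thr (p^k) ys1 + (B - A) * c"
          unfolding ys'_def using k1 cK by simp
        moreover have "B * c = A * c + (B - A) * c" using AB by (simp add: add_mult_distrib[symmetric])
        ultimately show ?thesis by linarith
      next
        case False
        then show ?thesis using small[OF lowx, of k] by simp
      qed
    qed
  qed
  have e1: "embeds (xs1 @ replicate A c) (ys' @ replicate A c)"
    by (rule emb_append[OF IH emb_mset]) simp
  have e2: "embeds (ys' @ replicate A c) (ys1 @ replicate (B - A) c @ replicate A c)"
    unfolding ys'_def append_assoc
    by (rule emb_append[OF emb_mset emb_append[OF _ emb_mset]]) (auto simp: cK emb_rep)
  have e3: "embeds (ys1 @ replicate (B - A) c @ replicate A c) ys"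
    by (rule emb_mset) (simp add: my AB replicate_add[symmetric])
  have "embeds xs (xs1 @ replicate A c)" by (rule emb_mset) (simp add: mx)
  then show ?case using emb_trans e1 e2 e3 by blast
qed

lemma sum_list_map_mset: "mset xs = mset ys \<Longrightarrow> sum_list (map (h :: _ \<Rightarrow> nat) xs) = sum_list (map h ys)"
  by (simp only: sum_mset_sum_list[symmetric] mset_map)

lemma thr_map: "thr t (map f xs) = sum_list (map (\<lambda>x. if t \<le> f x then f x else 0) xs)"
  by (simp add: thr_def o_def)

lemma thr_pmult: "thr t (pmult lam nu) = sum_list (map (\<lambda>x. thr t (map (\<lambda>y. x * y) nu)) lam)"
proof -
  have "thr t (pmult lam nu) = thr t [x * y. x \<leftarrow> lam, y \<leftarrow> nu]"
    unfolding pmult_def by (rule thr_mset) simp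
  also have "\<dots> = sum_list (map (\<lambda>x. thr t (map (\<lambda>y. x * y) nu)) lam)"
    by (induction lam) (auto simp: thr_def)
  finally show ?thesis .
qed

lemma sum_ppart: "sum_list (map (h :: _ \<Rightarrow> nat) (ppart p a s)) = (\<Sum>j<Suc s. a j * h (p ^ j))"
proof -
  have "sum_list (map h (ppart p a s)) =
      sum_list (map h (concat (map (\<lambda>k. replicate (a k) (p ^ k)) [0..<Suc s])))"
    unfolding ppart_def by (rule sum_list_map_mset) simp
  also have "\<dots> = sum_list (map (\<lambda>k. a k * h (p ^ k)) [0..<Suc s])"
    by (induction s) (simp_all add: sum_list_replicate)
  also have "\<dots> = (\<Sum>j<Suc s. a j * h (p ^ j))"
    by (simp add: sum_set_upt_conv_sum_list_nat[symmetric] atLeast0LessThan)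
  finally show ?thesis .
qed

definition GG :: "nat \<Rightarrow> nat list \<Rightarrow> nat \<Rightarrow> nat \<Rightarrow> nat" where
  "GG p nu k j = sum_list (map (\<lambda>y. if p ^ k \<le> p ^ j * y then p ^ j * y else 0) nu)"

definition FF :: "nat \<Rightarrow> nat \<Rightarrow> (nat \<Rightarrow> nat) \<Rightarrow> nat list \<Rightarrow> nat \<Rightarrow> nat" where
  "FF p s a nu k = (\<Sum>j<Suc s. a j * GG p nu k j)"

lemma Fcomp: "thr (p ^ k) (pmult (ppart p a s) nu) = FF p s a nu k"
  unfolding thr_pmult sum_ppart FF_def GG_def thr_map ..

lemma keylem:
  fixes p :: nat
  assumes p: "p \<ge> 2" and e: "p ^ e \<le> y" "y < p ^ Suc e"
  shows "(p ^ k \<le> p ^ j * p ^ e) \<longleftrightarrow> (p ^ k \<le> p ^ j * y)"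
proof
  assume "p ^ k \<le> p ^ j * p ^ e" then show "p ^ k \<le> p ^ j * y" using e by (meson le_trans mult_le_mono2)
next
  assume h: "p ^ k \<le> p ^ j * y"
  have "p ^ j * y < p ^ j * p ^ Suc e" by (rule mult_strict_left_mono) (use e p in auto)
  then have "p ^ k < p ^ j * p ^ Suc e" using h by linarith
  then have "p ^ k < p ^ (j + Suc e)" by (simp only: power_add)
  moreover have "1 < p" using p by simp
  ultimately have "k < j + Suc e" using power_less_imp_less_exp by blast
  then have "p ^ k \<le> p ^ (j + e)" using p by (intro power_increasing) auto
  then show "p ^ k \<le> p ^ j * p ^ e" by (simp add: power_add)
qed

lemma sum_list_map_concat: "sum_list (map (h :: _ \<Rightarrow> nat) (concat (map f xs))) = sum_list (map (\<lambda>y. sum_list (map h (f y))) xs)"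
  by (induction xs) auto

lemma nu_prime:
  fixes p :: nat assumes p: "p \<ge> 2" and nu: "is_partition nu" "nu \<noteq> []"
  shows "\<exists>nu' E. is_partition nu' \<and> nu' \<noteq> [] \<and> (\<forall>y\<in>set nu'. \<exists>e\<le>E. y = p^e)
     \<and> (\<forall>k j. GG p nu' k j = p^E * GG p nu k j)"
proof -
  define e where "e y = (SOME e. p^e \<le> y \<and> y < p^(e+1))" for y
  have e_spec: "p^(e y) \<le> y \<and> y < p^(Suc (e y))" if "y \<in> set nu" for y
  proof -
    have "y \<ge> 1" using nu that unfolding is_partition_def by auto
    from ex_power_ivl1[OF p this] have "\<exists>n. p ^ n \<le> y \<and> y < p ^ (n + 1)" .
    from someI_ex[OF this] show ?thesis unfolding e_def by simp
  qed
  define E where "E = sum_list nu"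
  have eE: "e y \<le> E" if "y \<in> set nu" for y
  proof -
    have "e y < 2 ^ e y" by (rule less_exp)
    also have "\<dots> \<le> p ^ e y" using p by (simp add: power_mono)
    also have "\<dots> \<le> y" using e_spec[OF that] by simp
    also have "\<dots> \<le> E" unfolding E_def by (rule member_le_sum_list[OF that]) auto
    finally show ?thesis by simp
  qed
  define L where "L = concat (map (\<lambda>y. replicate (y * p^(E - e y)) (p^(e y))) nu)"
  define nu' where "nu' = rev (sort L)"
  have mL: "mset nu' = mset L" unfolding nu'_def by simp
  have setL: "set nu' = set L" unfolding nu'_def by simp
  have part: "is_partition nu'"
    unfolding is_partition_def nu'_def
    using p by (auto simp: sorted_wrt_rev L_def)
  have ne: "nu' \<noteq> []"
  proof -
    obtain y ys where nuy: "nu = y # ys" using nu(2) by (cases nu) auto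
    have "y \<ge> 1" using nu unfolding is_partition_def nuy by auto
    then have "y * p^(E - e y) > 0" using p by simp
    then have "L \<noteq> []" unfolding L_def nuy using p by simp
    then show ?thesis using setL by auto
  qed
  have pw: "\<forall>y\<in>set nu'. \<exists>e'\<le>E. y = p^e'"
    using eE unfolding setL L_def by auto
  have GG: "GG p nu' k j = p^E * GG p nu k j" for k j
  proof -
    define h where "h z = (if p ^ k \<le> p ^ j * z then p ^ j * z else 0)" for z
    have "GG p nu' k j = sum_list (map h L)"
      unfolding GG_def h_def by (rule sum_list_map_mset[OF mL])
    also have "\<dots> = sum_list (map (\<lambda>y. y * p^(E - e y) * h (p ^ e y)) nu)"
      unfolding L_def sum_list_map_concat by (simp add: sum_list_replicate)
    also have "\<dots> = sum_list (map (\<lambda>y. p^E * h y) nu)"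
    proof (rule arg_cong[where f=sum_list], rule map_cong[OF refl])
      fix y assume y: "y \<in> set nu"
      have c: "(p ^ k \<le> p ^ j * p ^ e y) = (p ^ k \<le> p ^ j * y)"
        using keylem[OF p] e_spec[OF y] by blast
      have pp: "p^(E - e y) * p ^ e y = p ^ E" using eE[OF y] by (simp add: power_add[symmetric])
      show "y * p^(E - e y) * h (p ^ e y) = p^E * h y"
        unfolding h_def c using pp by (simp add: algebra_simps)
    qed
    also have "\<dots> = p^E * GG p nu k j"
      unfolding GG_def h_def by (simp add: sum_list_const_mult)
    finally show ?thesis .
  qed
  show ?thesis using part ne pw GG by blast
qed

definition Good :: "nat \<Rightarrow> nat \<Rightarrow> (nat \<Rightarrow> nat) \<Rightarrow> (nat \<Rightarrow> nat) \<Rightarrow> bool" where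
  "Good p s a b = (\<exists>nu. is_partition nu \<and> nu \<noteq> [] \<and> (\<forall>k. FF p s a nu k \<le> FF p s b nu k))"

lemma set_ppart: "x \<in> set (ppart p a s) \<Longrightarrow> \<exists>j\<le>s. x = p ^ j"
  unfolding ppart_def
proof -
  assume "x \<in> set (rev (sort (concat (map (\<lambda>k. replicate (a k) (p ^ k)) [0..<Suc s]))))"
  then have "x \<in> set (concat (map (\<lambda>k. replicate (a k) (p ^ k)) [0..<Suc s]))" by simp
  then obtain k where "k \<in> set [0..<Suc s]" "x \<in> set (replicate (a k) (p ^ k))"
    unfolding set_concat set_map by blast
  then have "k < Suc s" "x = p ^ k" by auto
  then show "\<exists>j\<le>s. x = p ^ j" by (intro exI[of _ k]) simp
qed

lemma set_pmult: "x \<in> set (pmult lam nu) \<Longrightarrow> \<exists>u\<in>set lam. \<exists>v\<in>set nu. x = u * v"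
  unfolding pmult_def by auto

lemma char:
  fixes p :: nat assumes p: "p \<ge> 2"
  shows "stably_embeds (ppart p a s) (ppart p b s) \<longleftrightarrow> Good p s a b"
proof
  assume "stably_embeds (ppart p a s) (ppart p b s)"
  then obtain nu where nu: "is_partition nu" "nu \<noteq> []"
      "embeds (pmult (ppart p a s) nu) (pmult (ppart p b s) nu)"
    unfolding stably_embeds_def by blast
  have "FF p s a nu k \<le> FF p s b nu k" for k
    using emb_thr[OF nu(3), of "p ^ k"] unfolding Fcomp .
  then show "Good p s a b" unfolding Good_def using nu by blast
next
  assume "Good p s a b"
  then obtain nu where nu: "is_partition nu" "nu \<noteq> []" "\<forall>k. FF p s a nu k \<le> FF p s b nu k"
    unfolding Good_def by blast
  obtain nu' E where nu': "is_partition nu'" "nu' \<noteq> []" "\<forall>y\<in>set nu'. \<exists>e\<le>E. y = p^e"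
      "\<forall>k j. GG p nu' k j = p^E * GG p nu k j"
    using nu_prime[OF p nu(1,2)] by blast
  have FFs: "FF p s c nu' k = p^E * FF p s c nu k" for c k
    unfolding FF_def by (simp add: nu'(4) sum_distrib_left algebra_simps)
  have pw: "\<exists>j\<le>s + E. x = p ^ j" if xin: "x \<in> set (pmult (ppart p c s) nu')" for x c
  proof -
    obtain u v where uv: "u \<in> set (ppart p c s)" "v \<in> set nu'" "x = u * v"
      using set_pmult[OF xin] by blast
    obtain j where j: "j \<le> s" "u = p ^ j" using set_ppart[OF uv(1)] by blast
    obtain e where e: "e \<le> E" "v = p ^ e" using nu'(3) uv(2) by blast
    show ?thesis using j e uv(3) by (intro exI[of _ "j + e"]) (simp add: power_add)
  qed
  have "embeds (pmult (ppart p a s) nu') (pmult (ppart p b s) nu')"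
  proof (rule greedy[OF p])
    show "\<forall>x\<in>set (pmult (ppart p a s) nu'). \<exists>j\<le>s + E. x = p ^ j" using pw by blast
    show "\<forall>x\<in>set (pmult (ppart p b s) nu'). \<exists>j\<le>s + E. x = p ^ j" using pw by blast
    show "\<forall>k. thr (p ^ k) (pmult (ppart p a s) nu') \<le> thr (p ^ k) (pmult (ppart p b s) nu')"
      unfolding Fcomp FFs using nu(3) by simp
  qed
  then show "stably_embeds (ppart p a s) (ppart p b s)"
    unfolding stably_embeds_def using nu' by blast
qed

lemma FF_shift:
  assumes "i \<le> s" "m \<le> a i"
  shows "FF p s a nu k = FF p s (a(i := a i - m)) nu k + m * GG p nu k i"
proof -
  have "FF p s a nu k = (\<Sum>j<Suc s. (a(i := a i - m)) j * GG p nu k j + (if j = i then m * GG p nu k j else 0))"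
    unfolding FF_def by (rule sum.cong) (use assms in \<open>auto simp: algebra_simps\<close>)
  also have "\<dots> = FF p s (a(i := a i - m)) nu k + m * GG p nu k i"
    unfolding FF_def sum.distrib using assms by simp
  finally show ?thesis .
qed

theorem corollary3p4:
  fixes p s i :: nat and a b :: "nat \<Rightarrow> nat"
  assumes "p \<ge> 2"
    and "\<forall>k > s. a k = 0" and "\<forall>k > s. b k = 0"
  shows "stably_embeds (ppart p a s) (ppart p b s) \<longleftrightarrow>
         stably_embeds (ppart p (a(i := a i - min (a i) (b i))) s)
                       (ppart p (b(i := b i - min (a i) (b i))) s)"
proof (cases "i \<le> s")
  case True
  define m where "m = min (a i) (b i)"
  have eq: "(FF p s a nu k \<le> FF p s b nu k) \<longleftrightarrow>
      (FF p s (a(i := a i - m)) nu k \<le> FF p s (b(i := b i - m)) nu k)" for nu k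
    using FF_shift[OF True, of m a p nu k] FF_shift[OF True, of m b p nu k]
    unfolding m_def by simp
  have "Good p s a b \<longleftrightarrow> Good p s (a(i := a i - m)) (b(i := b i - m))"
    unfolding Good_def using eq by simp
  then show ?thesis unfolding char[OF assms(1)] m_def .
next
  case False
  then have "a i = 0" "b i = 0" using assms(2,3) by auto
  then show ?thesis by (simp add: fun_upd_idem)
qed

end
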